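(* In the i.i.d. setting below, assume [B1]–[B5]. Then $n_1^-\to^p0$ and $n_1^{1/2}d_n\to^p0$ (condition [A5]), and $$n_1^-\sum_{i\in G^1}Y^i_\tau\to^p\widetilde q_\tau:=E[Y^1_\tau\mid X^1\in\mathcal X,Z^1=1]>0$$ (condition [A7]).
   Context: For each $n\in\mathbb N$, $\mathbb G=\{1,\dots,n\}$ and each $i$ has a survival time $T^i>0$, censoring time $U^i>0$, covariate $X^i\in\mathbb R^d$ and assignment $Z^i\in\{0,1\}$; the vectors $V^i=(X^i,Z^i,T^i,U^i)$, $i=1,\dots,n$, are i.i.d. for each $n$, and for each $z$ the conditional law of $(X^1,T^1,U^1)$ given $Z^1=z$ does not depend on $n$. Put $\widetilde T^i=T^i\wedge U^i$, $\mathbb G^z=\{i:Z^i=z\}$, $Y^i_t=1_{\{\widetilde T^i\ge t\}}$. Fix $\tau>0$, a compact $\mathcal X\subset\mathbb R^d$ and, for each $n$, a finite partition $\mathbb A$ of $\mathcal X$ into measurable sets; $d_n=\max_{a\in\mathbb A}\mathrm{diam}(a)$. Let $\mathcal P=\{(i,j)\in\mathbb G^1\times\mathbb G^0:\ X^i,X^j\in a\text{ for some }a\in\mathbb A\}$, $G^1$ the set of first coordinates of elements of $\mathcal P$, $n_1=\#G^1$; $x^-=x^{-1}$ if $x\ne0$, $0^-=0$. $a_n\lesssim b_n$ means $a_n\le Cb_n$ for a constant $C>0$ and all $n$; $a_n\asymp b_n$ means both $\lesssim$ and $\gtrsim$. [B1]: constants $\beta,\theta\in(0,1)$ and $\bar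 d\in\{1,\dots,d\}$ satisfy $\beta<2\theta$ and $\bar d\theta<1$. [B2]: $P(Z^1=1)\asymp n^{\beta-1}$. [B3]: the conditional law of $X^1$ given $Z^1=z$ has a density $f(\cdot\mid z)$ w.r.t. a $\sigma$-finite measure $\nu$ on $\mathbb R^d$ with $\nu(\mathcal X)<\infty$, and $\operatorname{ess\,sup}_{x\in\mathcal X}f(x\mid1)<\infty$, $\operatorname{ess\,inf}_{x\in\mathcal X}\big(f(x\mid0)E[Y^1_\tau\mid X^1=x,Z^1=0]\big)>0$ (w.r.t. $\nu$). [B4]: $P(\widetilde T^1=s,X^1\in\mathcal X\mid Z^1=1)=0$ for all $s\in[0,\tau]$ and $P(\widetilde T^1\ge\tau,X^1\in\mathcal X\mid Z^1=1)>0$. [B5]: $d_n=O(n^{-\theta})$ and $n^{-\bar d\theta}\lesssim\min_{a\in\mathbb A}\nu(a)\le\max_{a\in\mathbb A}\nu(a)\lesssim n^{-\bar d\theta}$. *)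

theory Defs
  imports "HOL-Probability.Probability"
begin

type_synonym 'x unit_rec = "bool \<times> 'x \<times> real \<times> real"

definition Zv :: "'x unit_rec \<Rightarrow> bool" where "Zv v = fst v"
definition Xv :: "'x unit_rec \<Rightarrow> 'x" where "Xv v = fst (snd v)"
definition Tv :: "'x unit_rec \<Rightarrow> real" where "Tv v = fst (snd (snd v))"
definition Uv :: "'x unit_rec \<Rightarrow> real" where "Uv v = snd (snd (snd v))"

definition Ttil :: "'x unit_rec \<Rightarrow> real" where "Ttil v = min (Tv v) (Uv v)"
definition Yat :: "real \<Rightarrow> 'x unit_rec \<Rightarrow> real" where
  "Yat t v = (if t \<le> Ttil v then 1 else 0)"

definition conv_prob :: "(nat \<Rightarrow> 'a measure) \<Rightarrow> (nat \<Rightarrow> 'a \<Rightarrow> real) \<Rightarrow> real \<Rightarrow> bool" where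
  "conv_prob M W c \<longleftrightarrow>
     (\<forall>e>0. (\<lambda>n. measure (M n) {\<omega> \<in> space (M n). e < \<bar>W n \<omega> - c\<bar>}) \<longlonglongrightarrow> 0)"

text \<open>The i.i.d. sample of size n: \<omega> i is the record V^i, i = 1..n.\<close>
definition sample_space :: "'x unit_rec measure \<Rightarrow> nat \<Rightarrow> (nat \<Rightarrow> 'x unit_rec) measure" where
  "sample_space L n = PiM {1..n} (\<lambda>_. L)"

definition G1 :: "'x set set \<Rightarrow> nat \<Rightarrow> (nat \<Rightarrow> 'x unit_rec) \<Rightarrow> nat set" where
  "G1 A n \<omega> = {i \<in> {1..n}. Zv (\<omega> i) \<and>
      (\<exists>j \<in> {1..n}. \<not> Zv (\<omega> j) \<and> (\<exists>a\<in>A. Xv (\<omega> i) \<in> a \<and> Xv (\<omega> j) \<in> a))}"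

definition n1 :: "'x set set \<Rightarrow> nat \<Rightarrow> (nat \<Rightarrow> 'x unit_rec) \<Rightarrow> nat" where
  "n1 A n \<omega> = card (G1 A n \<omega>)"

definition pinv :: "real \<Rightarrow> real" where "pinv x = (if x = 0 then 0 else 1 / x)"

definition mesh :: "'x::metric_space set set \<Rightarrow> real" where
  "mesh A = (if A = {} then 0 else Max (diameter ` A))"

end

theory Submission
  imports Defs "HOL-Real_Asymp.Real_Asymp"
begin

lemma fpps:
  assumes "prob_space L"
  shows "finite_product_prob_space (\<lambda>_. L) {1..n::nat}"
proof -
  interpret L: prob_space L by fact
  show ?thesis
    by (intro finite_product_prob_space.intro finite_product_sigma_finite.intro
         product_prob_spaceI finite_product_sigma_finite_axioms.intro)
       (auto simp: product_sigma_finite_def intro: L.prob_space_axioms L.sigma_finite_measure_axioms)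
qed

lemma prob_PiM:
  assumes "prob_space L"
  shows "prob_space (PiM {1..n::nat} (\<lambda>_. L))"
proof -
  interpret finite_product_prob_space "\<lambda>_. L" "{1..n}" using fpps[OF assms] .
  show ?thesis by (rule prob_space_axioms)
qed

lemma meas_PiE:
  assumes "prob_space L" "\<And>i. i \<in> {1..n} \<Longrightarrow> B i \<in> sets L"
  shows "measure (PiM {1..n::nat} (\<lambda>_. L)) (PiE {1..n} B) = (\<Prod>i\<in>{1..n}. measure L (B i))"
proof -
  interpret finite_product_prob_space "\<lambda>_. L" "{1..n}" using fpps[OF assms(1)] .
  show ?thesis using prob_times[of B] assms(2) by simp
qed

lemma meas_all:
  assumes L: "prob_space L" and E: "E \<in> sets L" and J: "J \<subseteq> {1..n::nat}"
  shows "measure (PiM {1..n} (\<lambda>_. L)) {\<omega> \<in> space (PiM {1..n} (\<lambda>_. L)). \<forall>i\<in>J. \<omega> i \<in> E}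
         = measure L E ^ card J"
proof -
  interpret L: prob_space L by fact
  have eq: "{\<omega> \<in> space (PiM {1..n} (\<lambda>_. L)). \<forall>i\<in>J. \<omega> i \<in> E}
       = PiE {1..n} (\<lambda>i. if i \<in> J then E else space L)"
    using J sets.sets_into_space[OF E] by (auto simp: space_PiM PiE_iff extensional_def split: if_splits; fastforce)
  have "(\<Prod>i\<in>{1..n}. measure L (if i \<in> J then E else space L))
      = (\<Prod>i\<in>{1..n}. (if i \<in> J then measure L E else 1))"
    by (intro prod.cong) (auto simp: L.prob_space)
  also have "\<dots> = measure L E ^ card J"
    using J by (simp add: prod.If_cases Int_absorb1 Int_absorb2)
  finally show ?thesis
    unfolding eq using E by (subst meas_PiE[OF L]) auto
qed

lemma meas_none:
  assumes L: "prob_space L" and E: "E \<in> sets L"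
  shows "measure (PiM {1..n::nat} (\<lambda>_. L)) {\<omega> \<in> space (PiM {1..n} (\<lambda>_. L)). \<forall>i\<in>{1..n}. \<omega> i \<notin> E}
         = (1 - measure L E) ^ n"
proof -
  interpret L: prob_space L by fact
  have eq: "{\<omega> \<in> space (PiM {1..n} (\<lambda>_. L)). \<forall>i\<in>{1..n}. \<omega> i \<notin> E}
       = PiE {1..n} (\<lambda>i. space L - E)"
    by (auto simp: space_PiM PiE_iff extensional_def)
  show ?thesis
    unfolding eq using E by (subst meas_PiE[OF L]) (auto simp: L.prob_compl)
qed

lemma card_sum_ind:
  "real (card {i\<in>I. \<omega> i \<in> E}) = (\<Sum>i\<in>I. indicator E (\<omega> i))" if "finite I"
proof -
  have "(\<Sum>i\<in>I. indicator E (\<omega> i) :: real) = (\<Sum>i\<in>I. if \<omega> i \<in> E then 1 else 0)"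
    by (intro sum.cong) (auto simp: indicator_def)
  also have "\<dots> = (\<Sum>i\<in>{i\<in>I. \<omega> i \<in> E}. 1)"
    using that by (rule sum.inter_filter[symmetric])
  finally show ?thesis by simp
qed

lemma count_cheb:
  assumes L: "prob_space L" and E: "E \<in> sets L" and t: "t > 0"
  shows "measure (PiM {1..n::nat} (\<lambda>_. L))
     {\<omega> \<in> space (PiM {1..n} (\<lambda>_. L)). t \<le> \<bar>real (card {i\<in>{1..n}. \<omega> i \<in> E}) - real n * measure L E\<bar>}
     \<le> real n * measure L E / t\<^sup>2"
proof -
  define \<Omega> where "\<Omega> = PiM {1..n} (\<lambda>_. L)"
  interpret L: prob_space L by fact
  interpret O: prob_space \<Omega> unfolding \<Omega>_def by (rule prob_PiM[OF L])
  define p where "p = measure L E"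
  define S where "S = (\<lambda>\<omega>. \<Sum>i\<in>{1..n}. indicator E (\<omega> i) :: real)"
  have ind_meas[measurable]: "(\<lambda>\<omega>. indicator E (\<omega> i) :: real) \<in> borel_measurable \<Omega>" if "i \<in> {1..n}" for i
    unfolding \<Omega>_def using E that by measurable
  have S_meas[measurable]: "S \<in> borel_measurable \<Omega>"
    unfolding S_def by (intro borel_measurable_sum ind_meas)
  have pair: "O.expectation (\<lambda>\<omega>. indicator E (\<omega> i) * indicator E (\<omega> j) :: real)
       = (if i = j then p else p\<^sup>2)" if ij: "i \<in> {1..n}" "j \<in> {1..n}" for i j
  proof -
    have "O.expectation (\<lambda>\<omega>. indicator E (\<omega> i) * indicator E (\<omega> j) :: real)
        = O.expectation (indicator {\<omega> \<in> space \<Omega>. \<forall>k\<in>{i,j}. \<omega> k \<in> E})"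
      by (intro Bochner_Integration.integral_cong) (auto simp: indicator_def)
    also have "\<dots> = measure \<Omega> {\<omega> \<in> space \<Omega>. \<forall>k\<in>{i,j}. \<omega> k \<in> E}"
      by (simp add: Int_absorb2)
    also have "\<dots> = p ^ card {i,j}"
      unfolding \<Omega>_def p_def using ij by (intro meas_all[OF L E]) auto
    finally show ?thesis by (auto simp: power2_eq_square)
  qed
  have single: "O.expectation (\<lambda>\<omega>. indicator E (\<omega> i) :: real) = p" if "i \<in> {1..n}" for i
  proof -
    have "(\<lambda>\<omega>. indicator E (\<omega> i) * indicator E (\<omega> i)) = (\<lambda>\<omega>. indicator E (\<omega> i) :: real)"
      by (auto simp: indicator_def fun_eq_iff)
    then show ?thesis using pair[OF that that] by simp
  qed
  have int_ind: "integrable \<Omega> (\<lambda>\<omega>. indicator E (\<omega> i) * indicator E (\<omega> j) :: real)"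
    if "i \<in> {1..n}" "j \<in> {1..n}" for i j
    using that by (intro O.integrable_const_bound[where B=1] borel_measurable_times ind_meas) (auto simp: indicator_def)
  have int_ind1: "integrable \<Omega> (\<lambda>\<omega>. indicator E (\<omega> i) :: real)" if "i \<in> {1..n}" for i
    using that by (intro O.integrable_const_bound[where B=1] ind_meas) (auto simp: indicator_def)
  have Ssq: "(S \<omega>)\<^sup>2 = (\<Sum>i\<in>{1..n}. \<Sum>j\<in>{1..n}. indicator E (\<omega> i) * indicator E (\<omega> j))" for \<omega>
    unfolding S_def power2_eq_square sum_product ..
  have intS: "integrable \<Omega> S" unfolding S_def using int_ind1 by auto
  have intS2: "integrable \<Omega> (\<lambda>\<omega>. (S \<omega>)\<^sup>2)" unfolding Ssq using int_ind by (intro Bochner_Integration.integrable_sum) auto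
  have ES: "O.expectation S = real n * p"
    unfolding S_def using int_ind1 single by (subst Bochner_Integration.integral_sum) auto
  have "O.expectation (\<lambda>\<omega>. (S \<omega>)\<^sup>2) = (\<Sum>i\<in>{1..n}. O.expectation (\<lambda>\<omega>. \<Sum>j\<in>{1..n}. indicator E (\<omega> i) * indicator E (\<omega> j)))"
    unfolding Ssq using int_ind by (intro Bochner_Integration.integral_sum Bochner_Integration.integrable_sum) auto
  also have "\<dots> = (\<Sum>i\<in>{1..n}. \<Sum>j\<in>{1..n}. O.expectation (\<lambda>\<omega>. indicator E (\<omega> i) * indicator E (\<omega> j)))"
    using int_ind by (intro sum.cong refl Bochner_Integration.integral_sum) auto
  also have "\<dots> = (\<Sum>i\<in>{1..n}. \<Sum>j\<in>{1..n::nat}. if i = j then p else p\<^sup>2)"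
    using pair by (intro sum.cong refl) auto
  finally have ES2: "O.expectation (\<lambda>\<omega>. (S \<omega>)\<^sup>2) = (\<Sum>i\<in>{1..n}. \<Sum>j\<in>{1..n::nat}. if i = j then p else p\<^sup>2)" .
  have "(\<Sum>i\<in>{1..n}. \<Sum>j\<in>{1..n::nat}. if i = j then p else p\<^sup>2) = (\<Sum>i\<in>{1..n}. \<Sum>j\<in>{1..n::nat}. p\<^sup>2 + (if i = j then p - p\<^sup>2 else 0))"
    by (intro sum.cong) auto
  also have "\<dots> = real n * (real n * p\<^sup>2) + real n * (p - p\<^sup>2)"
    by (simp add: sum.distrib algebra_simps)
  finally have ES2': "(\<Sum>i\<in>{1..n}. \<Sum>j\<in>{1..n::nat}. if i = j then p else p\<^sup>2) = real n * (real n * p\<^sup>2) + real n * (p - p\<^sup>2)" .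
  have ES2'': "O.expectation (\<lambda>\<omega>. (S \<omega>)\<^sup>2) = real n * (real n * p\<^sup>2) + real n * (p - p\<^sup>2)" using ES2 ES2' by simp
  have var: "O.variance S \<le> real n * p"
  proof -
    have "O.variance S = O.expectation (\<lambda>\<omega>. (S \<omega>)\<^sup>2) - (O.expectation S)\<^sup>2"
      by (rule O.variance_eq[OF intS intS2])
    also have "\<dots> = real n * p - real n * p\<^sup>2"
      unfolding ES ES2'' by (simp add: power2_eq_square algebra_simps)
    finally show ?thesis by simp
  qed
  have cheb: "O.prob {\<omega> \<in> space \<Omega>. \<bar>S \<omega> - O.expectation S\<bar> \<ge> t} \<le> O.variance S / t\<^sup>2"
    by (rule O.Chebyshev_inequality[OF S_meas intS2 t])
  have "{\<omega> \<in> space \<Omega>. t \<le> \<bar>real (card {i\<in>{1..n}. \<omega> i \<in> E}) - real n * p\<bar>}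
       = {\<omega> \<in> space \<Omega>. \<bar>S \<omega> - O.expectation S\<bar> \<ge> t}"
    unfolding ES unfolding S_def using card_sum_ind[of "{1..n}" _ E] by simp
  with cheb var t show ?thesis unfolding \<Omega>_def[symmetric] p_def[symmetric]
    by (smt (verit) divide_right_mono zero_le_power2)
qed

lemma squeeze0:
  assumes "eventually (\<lambda>n. x n \<le> b n) sequentially" "b \<longlonglongrightarrow> 0" "\<And>n. 0 \<le> x n"
  shows "x \<longlonglongrightarrow> (0::real)"
  by (rule tendsto_sandwich[of "\<lambda>_. 0" x sequentially b]) (use assms in auto)

lemma measure_mono_any:
  assumes "finite_measure M" "T \<in> sets M" "S \<subseteq> T"
  shows "measure M S \<le> measure M T"
proof (cases "S \<in> sets M")
  case True
  then show ?thesis using assms finite_measure.finite_measure_mono by blast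
next
  case False
  then show ?thesis by (simp add: measure_notin_sets)
qed

lemma pow_exp_bound:
  fixes p :: real
  assumes "0 \<le> p" "p \<le> 1"
  shows "(1 - p) ^ n \<le> exp (- (real n * p))"
proof -
  have "(1 - p) ^ n \<le> exp (- p) ^ n"
    using exp_ge_add_one_self[of "-p"] assms by (intro power_mono) auto
  also have "\<dots> = exp (real n * (- p))" by (rule exp_of_nat_mult[symmetric])
  finally show ?thesis by simp
qed

lemma count_set_meas:
  assumes E: "E \<in> sets L"
  shows "{\<omega> \<in> space (PiM {1..n::nat} (\<lambda>_. L)). t \<le> \<bar>real (card {i\<in>{1..n}. \<omega> i \<in> E}) - c\<bar>}
        \<in> sets (PiM {1..n} (\<lambda>_. L))"
proof -
  have eq: "{\<omega> \<in> space (PiM {1..n::nat} (\<lambda>_. L)). t \<le> \<bar>real (card {i\<in>{1..n}. \<omega> i \<in> E}) - c\<bar>}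
     = {\<omega> \<in> space (PiM {1..n::nat} (\<lambda>_. L)). t \<le> \<bar>(\<Sum>i\<in>{1..n}. indicator E (\<omega> i)) - c\<bar>}"
    using card_sum_ind[of "{1..n}" _ E] by simp
  show ?thesis unfolding eq using E by measurable
qed

lemma none_set_meas:
  assumes E: "E \<in> sets L"
  shows "{\<omega> \<in> space (PiM {1..n::nat} (\<lambda>_. L)). \<forall>j\<in>{1..n}. \<omega> j \<notin> E} \<in> sets (PiM {1..n} (\<lambda>_. L))"
  using E by measurable

lemma ratio_bound:
  fixes x y \<mu> q \<delta> e :: real
  assumes mu: "\<mu> > 0" and q: "0 < q" "q \<le> 1" and d: "0 < \<delta>" "\<delta> \<le> 1/2" "4 * \<delta> \<le> e"
    and hx: "\<bar>x - \<mu>\<bar> < \<delta> * \<mu>" and hy: "\<bar>y - q * \<mu>\<bar> < \<delta> * \<mu>"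
  shows "\<bar>y / x - q\<bar> < e"
proof -
  have dm: "\<delta> * \<mu> \<le> \<mu> / 2" using mult_right_mono[OF d(2), of \<mu>] mu by simp
  have xl: "x > \<mu> / 2" using hx dm by (simp add: abs_less_iff)
  then have xp: "x > 0" using mu by simp
  have qa: "q * \<bar>\<mu> - x\<bar> \<le> \<bar>\<mu> - x\<bar>" using q mult_right_mono[OF q(2), of "\<bar>\<mu> - x\<bar>"] by simp
  have eq: "y - q * x = (y - q * \<mu>) + q * (\<mu> - x)" by (simp add: algebra_simps)
  have "\<bar>y - q * x\<bar> \<le> \<bar>y - q * \<mu>\<bar> + q * \<bar>\<mu> - x\<bar>"
    unfolding eq using q by (metis abs_mult abs_of_pos abs_triangle_ineq)
  also have "\<dots> < 2 * \<delta> * \<mu>" using hy hx qa by (simp add: abs_minus_commute)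
  finally have num: "\<bar>y - q * x\<bar> < 2 * \<delta> * \<mu>" .
  have eq2: "\<bar>y / x - q\<bar> = \<bar>y - q * x\<bar> / x"
  proof -
    have "y / x - q = (y - q * x) / x" using xp by (simp add: field_simps)
    then show ?thesis using xp by simp
  qed
  have "\<bar>y - q * x\<bar> / x < 2 * \<delta> * \<mu> / x" using num xp by (rule divide_strict_right_mono)
  also have "2 * \<delta> * \<mu> / x \<le> 4 * \<delta>"
  proof -
    have "2 * \<delta> * \<mu> \<le> 4 * \<delta> * x" using xl d by (simp add: mult_left_mono)
    then show ?thesis using xp by (simp add: divide_le_eq)
  qed
  finally show ?thesis using eq2 d by simp
qed

lemma mesh_nonneg:
  assumes "finite A" "\<And>a. a \<in> A \<Longrightarrow> bounded a"
  shows "0 \<le> mesh A"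
proof (cases "A = {}")
  case True then show ?thesis by (simp add: mesh_def)
next
  case False
  then obtain a where a: "a \<in> A" by blast
  have "0 \<le> diameter a" using assms(2)[OF a] by (rule diameter_ge_0)
  also have "\<dots> \<le> Max (diameter ` A)" using assms(1) a by (intro Max_ge) auto
  finally show ?thesis using False by (simp add: mesh_def)
qed

theorem mainTheorem15:
  fixes P :: "nat \<Rightarrow> ('x::euclidean_space) unit_rec measure"
    and Q :: "bool \<Rightarrow> ('x \<times> real \<times> real) measure"
    and \<nu> :: "'x measure"
    and f :: "bool \<Rightarrow> 'x \<Rightarrow> real"
    and g :: "'x \<Rightarrow> real"
    and \<X> :: "'x set"
    and A :: "nat \<Rightarrow> 'x set set"
    and \<tau> \<beta> \<theta> :: real
    and dbar :: nat
  assumes P_prob: "\<And>n. prob_space (P n)"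
    and P_sets: "\<And>n. sets (P n) = sets (count_space UNIV \<Otimes>\<^sub>M borel)"
    and Q_prob: "\<And>z. prob_space (Q z)"
    and Q_sets: "\<And>z. sets (Q z) = sets borel"
    \<comment> \<open>the conditional law of (X,T,U) given Z = z is Q z, for every n\<close>
    and cond_law: "\<And>n z B. B \<in> sets borel \<Longrightarrow>
        measure (P n) {v \<in> space (P n). Zv v = z \<and> snd v \<in> B}
          = measure (P n) {v \<in> space (P n). Zv v = z} * measure (Q z) B"
    \<comment> \<open>T > 0 and U > 0\<close>
    and TU_pos: "\<And>n. AE v in P n. Tv v > 0 \<and> Uv v > 0"
    and tau_pos: "\<tau> > 0"
    and X_compact: "compact \<X>"
    \<comment> \<open>[B1]\<close>
    and B1: "0 < \<beta>" "\<beta> < 1" "0 < \<theta>" "\<theta> < 1" "1 \<le> dbar" "dbar \<le> DIM('x)"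
            "\<beta> < 2 * \<theta>" "real dbar * \<theta> < 1"
    \<comment> \<open>[B2]\<close>
    and B2: "\<exists>c C. 0 < c \<and> 0 < C \<and> (\<forall>n\<ge>1.
         c * real n powr (\<beta> - 1) \<le> measure (P n) {v \<in> space (P n). Zv v} \<and>
         measure (P n) {v \<in> space (P n). Zv v} \<le> C * real n powr (\<beta> - 1))"
    \<comment> \<open>[B3]\<close>
    and nu_sets: "sets \<nu> = sets borel"
    and nu_sigma: "sigma_finite_measure \<nu>"
    and nu_X: "emeasure \<nu> \<X> < \<infinity>"
    and f_meas: "\<And>z. f z \<in> borel_measurable borel"
    and f_nonneg: "\<And>z x. 0 \<le> f z x"
    and f_dens: "\<And>z. distr (Q z) borel fst = density \<nu> (\<lambda>x. ennreal (f z x))"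
    and f1_esssup: "\<exists>C. AE x in \<nu>. x \<in> \<X> \<longrightarrow> f True x \<le> C"
    \<comment> \<open>g is a version of x \<mapsto> E[Y_\<tau> | X = x, Z = 0]\<close>
    and g_int: "integrable (distr (Q False) borel fst) g"
    and g_cond: "\<And>B. B \<in> sets borel \<Longrightarrow>
        measure (Q False) {w \<in> space (Q False). fst w \<in> B \<and> \<tau> \<le> min (fst (snd w)) (snd (snd w))}
          = (\<integral>x. indicator B x * g x \<partial>distr (Q False) borel fst)"
    and B3_essinf: "\<exists>c>0. AE x in \<nu>. x \<in> \<X> \<longrightarrow> c \<le> f False x * g x"
    \<comment> \<open>[B4]\<close>
    and B4a: "\<And>s. 0 \<le> s \<Longrightarrow> s \<le> \<tau> \<Longrightarrow>
        measure (Q True) {w \<in> space (Q True). min (fst (snd w)) (snd (snd w)) = s \<and> fst w \<in> \<X>} = 0"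
    and B4b: "measure (Q True) {w \<in> space (Q True). \<tau> \<le> min (fst (snd w)) (snd (snd w)) \<and> fst w \<in> \<X>} > 0"
    \<comment> \<open>A n is a finite measurable partition of \<X>\<close>
    and A_fin: "\<And>n. finite (A n)"
    and A_meas: "\<And>n a. a \<in> A n \<Longrightarrow> a \<in> sets borel"
    and A_disj: "\<And>n. disjoint (A n)"
    and A_cover: "\<And>n. \<Union> (A n) = \<X>"
    and A_nonempty: "\<And>n a. a \<in> A n \<Longrightarrow> a \<noteq> {}"
    \<comment> \<open>[B5]\<close>
    and B5_diam: "\<exists>C. \<forall>n\<ge>1. mesh (A n) \<le> C * real n powr (- \<theta>)"
    and B5_vol: "\<exists>c C. 0 < c \<and> 0 < C \<and> (\<forall>n\<ge>1. \<forall>a\<in>A n.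
         c * real n powr (- (real dbar * \<theta>)) \<le> measure \<nu> a \<and>
         measure \<nu> a \<le> C * real n powr (- (real dbar * \<theta>)))"
  shows "conv_prob (\<lambda>n. sample_space (P n) n) (\<lambda>n \<omega>. pinv (real (n1 (A n) n \<omega>))) 0
       \<and> conv_prob (\<lambda>n. sample_space (P n) n) (\<lambda>n \<omega>. sqrt (real (n1 (A n) n \<omega>)) * mesh (A n)) 0
       \<and> (let q = measure (Q True) {w \<in> space (Q True). fst w \<in> \<X> \<and> \<tau> \<le> min (fst (snd w)) (snd (snd w))}
                 / measure (Q True) {w \<in> space (Q True). fst w \<in> \<X>}
          in q > 0 \<and>
             conv_prob (\<lambda>n. sample_space (P n) n)
               (\<lambda>n \<omega>. pinv (real (n1 (A n) n \<omega>)) * (\<Sum>i \<in> G1 (A n) n \<omega>. Yat \<tau> (\<omega> i))) q)"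
proof -
  note P_sp = P_prob
  have Pspace: "space (P n) = UNIV" for n
    using sets_eq_imp_space_eq[OF P_sets[of n]] by (simp add: space_pair_measure)
  have Qspace: "space (Q z) = UNIV" for z
    using sets_eq_imp_space_eq[OF Q_sets[of z]] by simp
  have fst_b[measurable]: "(fst :: 'x \<times> real \<times> real \<Rightarrow> 'x) \<in> borel_measurable borel"
    by (intro borel_measurable_continuous_onI continuous_intros)
  have min_b[measurable]: "(\<lambda>w::'x \<times> real \<times> real. min (fst (snd w)) (snd (snd w))) \<in> borel_measurable borel"
    by (intro borel_measurable_continuous_onI continuous_intros)
  have X_sets[measurable]: "\<X> \<in> sets borel"
    using X_compact by (simp add: compact_imp_closed)
  have BXs[measurable]: "{w::'x \<times> real \<times> real. fst w \<in> \<X>} \<in> sets borel"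
    by measurable
  have B2s[measurable]: "{w::'x \<times> real \<times> real. fst w \<in> \<X> \<and> \<tau> \<le> min (fst (snd w)) (snd (snd w))} \<in> sets borel"
    by measurable
  have Ba[measurable]: "{w::'x \<times> real \<times> real. fst w \<in> a} \<in> sets borel" if "a \<in> A n" for a n
    using A_meas[OF that] by measurable
  have Pev: "{v \<in> space (P n). Zv v = z \<and> snd v \<in> B} \<in> sets (P n)" if "B \<in> sets borel" for n z B
  proof -
    have [measurable_cong]: "sets (P n) = sets (count_space UNIV \<Otimes>\<^sub>M (borel :: ('x \<times> real \<times> real) measure))"
      by (rule P_sets)
    show ?thesis using that unfolding Zv_def by measurable
  qed

  obtain c\<pi> C\<pi> where c\<pi>: "0 < c\<pi>" "0 < C\<pi>" and
    \<pi>b: "\<And>n. n \<ge> 1 \<Longrightarrow> c\<pi> * real n powr (\<beta> - 1) \<le> measure (P n) {v \<in> space (P n). Zv v} \<and>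
         measure (P n) {v \<in> space (P n). Zv v} \<le> C\<pi> * real n powr (\<beta> - 1)"
    using B2 by blast
  obtain Cd where Cd: "\<And>n. n \<ge> 1 \<Longrightarrow> mesh (A n) \<le> Cd * real n powr (- \<theta>)"
    using B5_diam by blast
  obtain c\<nu> C\<nu> where c\<nu>: "0 < c\<nu>" and
    \<nu>b: "\<And>n a. n \<ge> 1 \<Longrightarrow> a \<in> A n \<Longrightarrow> c\<nu> * real n powr (- (real dbar * \<theta>)) \<le> measure \<nu> a"
    using B5_vol by blast
  obtain cg where cg: "cg > 0" and cgAE: "AE x in \<nu>. x \<in> \<X> \<longrightarrow> cg \<le> f False x * g x"
    using B3_essinf by blast
  define \<pi> where "\<pi> n = measure (P n) {v \<in> space (P n). Zv v}" for n
  define r where "r = measure (Q True) {w \<in> space (Q True). fst w \<in> \<X>}"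
  define r2 where "r2 = measure (Q True) {w \<in> space (Q True). fst w \<in> \<X> \<and> \<tau> \<le> min (fst (snd w)) (snd (snd w))}"
  define q where "q = r2 / r"
  interpret QT: prob_space "Q True" by (rule Q_prob)
  interpret QF: prob_space "Q False" by (rule Q_prob)
  have r2pos: "r2 > 0"
    unfolding r2_def using B4b by (simp add: conj_commute)
  have r2r: "r2 \<le> r"
    unfolding r2_def r_def using BXs by (intro QT.finite_measure_mono) (auto simp: Qspace Q_sets)
  have rpos: "r > 0" using r2pos r2r by simp
  have r1: "r \<le> 1" unfolding r_def by simp
  have qpos: "q > 0" and q1: "q \<le> 1" unfolding q_def using r2pos r2r rpos by auto
  have \<pi>0: "0 \<le> \<pi> n" "\<pi> n \<le> 1" for n
    unfolding \<pi>_def using prob_space.prob_le_1[OF P_prob] by auto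

  define E1 where "E1 n = {v \<in> space (P n). Zv v \<and> Xv v \<in> \<X>}" for n
  define E2 where "E2 n = {v \<in> space (P n). Zv v \<and> Xv v \<in> \<X> \<and> \<tau> \<le> Ttil v}" for n
  define Ea where "Ea n a = {v \<in> space (P n). \<not> Zv v \<and> Xv v \<in> a}" for n a
  have E1eq: "E1 n = {v \<in> space (P n). Zv v = True \<and> snd v \<in> {w. fst w \<in> \<X>}}" for n
    unfolding E1_def Xv_def by auto
  have E2eq: "E2 n = {v \<in> space (P n). Zv v = True \<and> snd v \<in> {w. fst w \<in> \<X> \<and> \<tau> \<le> min (fst (snd w)) (snd (snd w))}}" for n
    unfolding E2_def Xv_def Ttil_def Tv_def Uv_def by auto
  have Eaeq: "Ea n a = {v \<in> space (P n). Zv v = False \<and> snd v \<in> {w. fst w \<in> a}}" for n a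
    unfolding Ea_def Xv_def by auto
  have E1s: "E1 n \<in> sets (P n)" for n unfolding E1eq by (rule Pev) measurable
  have E2s: "E2 n \<in> sets (P n)" for n unfolding E2eq by (rule Pev) measurable
  have Eas: "Ea n a \<in> sets (P n)" if "a \<in> A n" for n a unfolding Eaeq by (rule Pev) (use that in measurable)
  have mE1: "measure (P n) (E1 n) = \<pi> n * r" for n
    unfolding E1eq using cond_law[OF BXs, of n True] by (simp add: \<pi>_def r_def Qspace)
  have mE2: "measure (P n) (E2 n) = \<pi> n * r2" for n
    unfolding E2eq using cond_law[OF B2s, of n True] by (simp add: \<pi>_def r2_def Qspace)
  have mZF: "measure (P n) {v \<in> space (P n). Zv v = False} = 1 - \<pi> n" for n
  proof -
    interpret Pn: prob_space "P n" by (rule P_prob)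
    have "{v \<in> space (P n). Zv v = False} = space (P n) - {v \<in> space (P n). Zv v}" by auto
    moreover have "{v \<in> space (P n). Zv v} \<in> sets (P n)"
      using Pev[of UNIV n True] by simp
    ultimately show ?thesis unfolding \<pi>_def by (simp add: Pn.prob_compl)
  qed
  have mEa: "measure (P n) (Ea n a) = (1 - \<pi> n) * measure (Q False) {w \<in> space (Q False). fst w \<in> a}"
    if "a \<in> A n" for n a
    unfolding Eaeq using cond_law[OF Ba[OF that], of n False] mZF[of n] by (simp add: Qspace)

  define D where "D = distr (Q False) borel fst"
  have Dsets: "sets D = sets borel" unfolding D_def by simp
  have g_b[measurable]: "g \<in> borel_measurable borel"
    using borel_measurable_integrable[OF g_int] measurable_cong_sets[OF Dsets refl, of borel] unfolding D_def by simp
  have f_b[measurable]: "f False \<in> borel_measurable \<nu>"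
    by (subst measurable_cong_sets[OF nu_sets refl]) (rule f_meas)
  have g_nu[measurable]: "g \<in> borel_measurable \<nu>"
    by (subst measurable_cong_sets[OF nu_sets refl]) (rule g_b)
  have aX: "a \<subseteq> \<X>" if "a \<in> A n" for a n using A_cover[of n] that by blast
  have a_fin: "emeasure \<nu> a < \<infinity>" if "a \<in> A n" for a n
  proof -
    have "emeasure \<nu> a \<le> emeasure \<nu> \<X>"
      by (rule emeasure_mono[OF aX[OF that]]) (simp add: nu_sets X_sets)
    then show ?thesis using nu_X by (rule le_less_trans)
  qed
  have cell: "cg * measure \<nu> a \<le> measure (Q False) {w \<in> space (Q False). fst w \<in> a}"
    if aA: "a \<in> A n" for a n
  proof -
    have a_b[measurable]: "a \<in> sets borel" using A_meas[OF aA] .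
    have a_nu[measurable]: "a \<in> sets \<nu>" using a_b nu_sets by simp
    have h_nu: "(\<lambda>x. indicator a x * g x :: real) \<in> borel_measurable \<nu>" by measurable
    have hD: "integrable D (\<lambda>x. indicator a x * g x)"
      using integrable_mult_indicator[of a D g] g_int a_b unfolding D_def by simp
    have dens: "D = density \<nu> (\<lambda>x. ennreal (f False x))" unfolding D_def by (rule f_dens)
    have hnu: "integrable \<nu> (\<lambda>x. f False x * (indicator a x * g x))"
    proof -
      have "integrable \<nu> (\<lambda>x. f False x *\<^sub>R (indicator a x * g x))"
        using hD unfolding dens
        by (rule integrable_density[THEN iffD1, rotated 3]) (auto simp: f_nonneg a_nu h_nu)
      then show ?thesis by simp
    qed
    have "measure (Q False) {w \<in> space (Q False). fst w \<in> a \<and> \<tau> \<le> min (fst (snd w)) (snd (snd w))}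
        = (\<integral>x. indicator a x * g x \<partial>D)"
      unfolding D_def by (rule g_cond[OF a_b])
    also have "\<dots> = (\<integral>x. f False x * (indicator a x * g x) \<partial>\<nu>)"
      unfolding dens
      by (subst integral_density) (auto simp: f_nonneg a_nu h_nu)
    also have "\<dots> \<ge> (\<integral>x. cg * indicator a x \<partial>\<nu>)"
    proof (rule integral_mono_AE)
      show "integrable \<nu> (\<lambda>x. cg * indicator a x)"
        using a_fin[OF aA] a_nu by (intro integrable_mult_right) (simp add: integrable_indicator_iff sets.Int_space_eq2)
      show "integrable \<nu> (\<lambda>x. f False x * (indicator a x * g x))" by (rule hnu)
      show "AE x in \<nu>. cg * indicator a x \<le> f False x * (indicator a x * g x)"
        using cgAE
      proof eventually_elim
        case (elim x)
        then show ?case using aX[OF aA] by (auto simp: indicator_def)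
      qed
    qed
    also have "(\<integral>x. cg * indicator a x \<partial>\<nu>) = cg * measure \<nu> a"
      using a_nu by (simp add: sets.Int_space_eq2)
    finally have "cg * measure \<nu> a \<le> measure (Q False) {w \<in> space (Q False). fst w \<in> a \<and> \<tau> \<le> min (fst (snd w)) (snd (snd w))}" .
    also have "\<dots> \<le> measure (Q False) {w \<in> space (Q False). fst w \<in> a}"
    proof -
      have "{w \<in> space (Q False). fst w \<in> a} \<in> sets (Q False)"
        using Ba[OF aA] by (simp add: Qspace Q_sets)
      then show ?thesis by (rule QF.finite_measure_mono[rotated]) auto
    qed
    finally show ?thesis .
  qed

  define m\<nu> where "m\<nu> = measure \<nu> \<X>"
  have cardA: "real (card (A n)) \<le> (m\<nu> / c\<nu>) * real n powr (real dbar * \<theta>)" if n1: "n \<ge> 1" for n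
  proof -
    have "(\<Sum>a\<in>A n. measure \<nu> a) = measure \<nu> (\<Union>(A n))"
      using A_fin[of n] A_disj[of n] a_fin A_meas nu_sets
      by (intro measure_Union'[symmetric]) (auto simp: fmeasurable_def disjoint_def)
    also have "\<dots> = m\<nu>" unfolding m\<nu>_def A_cover ..
    finally have sumeq: "(\<Sum>a\<in>A n. measure \<nu> a) = m\<nu>" .
    have "real (card (A n)) * (c\<nu> * real n powr (- (real dbar * \<theta>))) \<le> (\<Sum>a\<in>A n. measure \<nu> a)"
      using \<nu>b[OF n1] by (intro sum_bounded_below) auto
    then have le: "real (card (A n)) * (c\<nu> / real n powr (real dbar * \<theta>)) \<le> m\<nu>"
      using sumeq by (simp add: powr_minus_divide)
    have pos: "real n powr (real dbar * \<theta>) > 0" using n1 by simp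
    show ?thesis using le pos c\<nu> by (simp add: field_simps)
  qed
  have \<pi>lim: "\<pi> \<longlonglongrightarrow> 0"
  proof (rule squeeze0[where b="\<lambda>n. C\<pi> * real n powr (\<beta> - 1)"])
    show "\<forall>\<^sub>F n in sequentially. \<pi> n \<le> C\<pi> * real n powr (\<beta> - 1)"
      using \<pi>b unfolding \<pi>_def eventually_sequentially by blast
    show "(\<lambda>n. C\<pi> * real n powr (\<beta> - 1)) \<longlonglongrightarrow> 0" using B1 by real_asymp
  qed (use \<pi>0 in auto)
  have \<pi>half: "\<forall>\<^sub>F n in sequentially. \<pi> n \<le> 1/2"
    using order_tendstoD(2)[OF \<pi>lim, of "1/2"] by (auto elim: eventually_mono)
  define \<mu> where "\<mu> n = real n * (\<pi> n * r)" for n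
  have \<mu>lo: "\<mu> n \<ge> c\<pi> * r * (real n * real n powr (\<beta> - 1))" if "n \<ge> 1" for n
  proof -
    have "c\<pi> * real n powr (\<beta> - 1) \<le> \<pi> n" using \<pi>b[OF that] unfolding \<pi>_def by simp
    then have "real n * (c\<pi> * real n powr (\<beta> - 1)) * r \<le> real n * \<pi> n * r"
      using rpos by (intro mult_right_mono mult_left_mono) auto
    then show ?thesis unfolding \<mu>_def by (simp add: mult_ac)
  qed
  have \<mu>hi: "\<mu> n \<le> C\<pi> * (real n * real n powr (\<beta> - 1))" if "n \<ge> 1" for n
  proof -
    have "\<mu> n \<le> real n * \<pi> n" unfolding \<mu>_def using r1 \<pi>0[of n]
      by (intro mult_left_mono) (auto simp: mult_left_le)
    also have "\<dots> \<le> real n * (C\<pi> * real n powr (\<beta> - 1))"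
      using \<pi>b[OF that] unfolding \<pi>_def by (intro mult_left_mono) auto
    finally show ?thesis by (simp add: mult_ac)
  qed
  have \<mu>pos: "\<mu> n > 0" if "n \<ge> 1" for n
  proof -
    have "c\<pi> * r * (real n * real n powr (\<beta> - 1)) > 0" using that c\<pi> rpos by simp
    then show ?thesis using \<mu>lo[OF that] by linarith
  qed
  have inv\<mu>: "(\<lambda>n. 1 / \<mu> n) \<longlonglongrightarrow> 0"
  proof (rule squeeze0[where b="\<lambda>n. 1 / (c\<pi> * r * (real n * real n powr (\<beta> - 1)))"])
    show "\<forall>\<^sub>F n in sequentially. 1 / \<mu> n \<le> 1 / (c\<pi> * r * (real n * real n powr (\<beta> - 1)))"
      unfolding eventually_sequentially
    proof (intro exI[of _ 1] allI impI)
      fix n :: nat assume n: "n \<ge> 1"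
      have "c\<pi> * r * (real n * real n powr (\<beta> - 1)) > 0" using n c\<pi> rpos by simp
      then show "1 / \<mu> n \<le> 1 / (c\<pi> * r * (real n * real n powr (\<beta> - 1)))"
        using \<mu>lo[OF n] by (intro divide_left_mono) auto
    qed
    show "(\<lambda>n. 1 / (c\<pi> * r * (real n * real n powr (\<beta> - 1)))) \<longlonglongrightarrow> 0"
      using B1 c\<pi> rpos by real_asymp
  qed (use \<pi>0 rpos in \<open>auto simp: \<mu>_def\<close>)

  define \<Omega> where "\<Omega> n = sample_space (P n) n" for n
  have \<Omega>def: "\<Omega> n = PiM {1..n} (\<lambda>_. P n)" for n unfolding \<Omega>_def sample_space_def ..
  have \<Omega>p: "prob_space (\<Omega> n)" for n unfolding \<Omega>def by (rule prob_PiM[OF P_prob])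
  have \<Omega>fin: "finite_measure (\<Omega> n)" for n
    using \<Omega>p[of n] by (simp add: prob_space_def)
  define NoC where "NoC n a = {\<omega> \<in> space (\<Omega> n). \<forall>j\<in>{1..n}. \<omega> j \<notin> Ea n a}" for n a
  define Bad where "Bad n = (\<Union>a\<in>A n. NoC n a)" for n
  have NoCs: "NoC n a \<in> sets (\<Omega> n)" if "a \<in> A n" for n a
    unfolding NoC_def \<Omega>def by (rule none_set_meas[OF Eas[OF that]])
  have Bads: "Bad n \<in> sets (\<Omega> n)" for n
    unfolding Bad_def using NoCs A_fin by (intro sets.finite_UN) auto
  define \<kappa> where "\<kappa> = cg * c\<nu> / 2"
  define bB where "bB n = (m\<nu> / c\<nu>) * real n powr (real dbar * \<theta>) * exp (- (\<kappa> * (real n * real n powr (- (real dbar * \<theta>)))))" for n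
  have mBad: "measure (\<Omega> n) (Bad n) \<le> bB n" if n1: "n \<ge> 1" and ph: "\<pi> n \<le> 1/2" for n
  proof -
    define e where "e = exp (- (\<kappa> * (real n * real n powr (- (real dbar * \<theta>)))))"
    have each: "measure (\<Omega> n) (NoC n a) \<le> e" if aA: "a \<in> A n" for a
    proof -
      interpret Pn: prob_space "P n" by (rule P_prob)
      define pa where "pa = measure (P n) (Ea n a)"
      have "measure (\<Omega> n) (NoC n a) = (1 - pa) ^ n"
        unfolding NoC_def \<Omega>def pa_def by (rule meas_none[OF P_prob Eas[OF aA]])
      also have "\<dots> \<le> exp (- (real n * pa))"
        unfolding pa_def by (intro pow_exp_bound) auto
      also have "\<dots> \<le> e"
      proof -
        have "cg * (c\<nu> * real n powr (- (real dbar * \<theta>))) \<le> cg * measure \<nu> a"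
          using \<nu>b[OF n1 aA] cg by (intro mult_left_mono) auto
        also have "\<dots> \<le> measure (Q False) {w \<in> space (Q False). fst w \<in> a}" by (rule cell[OF aA])
        finally have c1: "cg * (c\<nu> * real n powr (- (real dbar * \<theta>))) \<le> measure (Q False) {w \<in> space (Q False). fst w \<in> a}" .
        have "\<kappa> * real n powr (- (real dbar * \<theta>)) \<le> (1 - \<pi> n) * measure (Q False) {w \<in> space (Q False). fst w \<in> a}"
        proof -
          have "\<kappa> * real n powr (- (real dbar * \<theta>)) = (1/2) * (cg * (c\<nu> * real n powr (- (real dbar * \<theta>))))"
            unfolding \<kappa>_def by simp
          also have "\<dots> \<le> (1 - \<pi> n) * measure (Q False) {w \<in> space (Q False). fst w \<in> a}"
            using ph c1 cg c\<nu> by (intro mult_mono) auto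
          finally show ?thesis .
        qed
        then have "\<kappa> * real n powr (- (real dbar * \<theta>)) \<le> pa"
          unfolding pa_def using mEa[OF aA] by simp
        then have "\<kappa> * (real n * real n powr (- (real dbar * \<theta>))) \<le> real n * pa"
        proof -
          assume h: "\<kappa> * real n powr (- (real dbar * \<theta>)) \<le> pa"
          have "real n * (\<kappa> * real n powr (- (real dbar * \<theta>))) \<le> real n * pa"
            using h by (rule mult_left_mono) simp
          then show ?thesis by (simp add: mult.left_commute)
        qed
        then show ?thesis unfolding e_def by simp
      qed
      finally show ?thesis .
    qed
    have "measure (\<Omega> n) (Bad n) \<le> (\<Sum>a\<in>A n. measure (\<Omega> n) (NoC n a))"
      unfolding Bad_def using A_fin NoCs by (intro measure_UNION_le) auto
    also have "\<dots> \<le> (\<Sum>a\<in>A n. e)" using each by (intro sum_mono) auto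
    also have "\<dots> = real (card (A n)) * e" by simp
    also have "\<dots> \<le> (m\<nu> / c\<nu>) * real n powr (real dbar * \<theta>) * e"
      using cardA[OF n1] by (intro mult_right_mono) (auto simp: e_def)
    finally show ?thesis unfolding bB_def e_def .
  qed
  have bBlim: "bB \<longlonglongrightarrow> 0"
    unfolding bB_def \<kappa>_def using B1 cg c\<nu> by real_asymp
  have Badlim: "(\<lambda>n. measure (\<Omega> n) (Bad n)) \<longlonglongrightarrow> 0"
  proof (rule squeeze0[OF _ bBlim])
    show "\<forall>\<^sub>F n in sequentially. measure (\<Omega> n) (Bad n) \<le> bB n"
      using \<pi>half eventually_ge_at_top[of 1] by eventually_elim (use mBad in auto)
  qed auto

  define N1 where "N1 n \<omega> = real (card {i\<in>{1..n}. \<omega> i \<in> E1 n})" for n \<omega>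
  define N2 where "N2 n \<omega> = real (card {i\<in>{1..n}. \<omega> i \<in> E2 n})" for n \<omega>
  define C1 where "C1 n \<delta> = {\<omega> \<in> space (\<Omega> n). \<delta> * \<mu> n \<le> \<bar>N1 n \<omega> - real n * measure (P n) (E1 n)\<bar>}" for n \<delta>
  define C2 where "C2 n \<delta> = {\<omega> \<in> space (\<Omega> n). \<delta> * \<mu> n \<le> \<bar>N2 n \<omega> - real n * measure (P n) (E2 n)\<bar>}" for n \<delta>
  have C1s: "C1 n \<delta> \<in> sets (\<Omega> n)" for n \<delta>
    unfolding C1_def N1_def \<Omega>def by (rule count_set_meas[OF E1s])
  have C2s: "C2 n \<delta> \<in> sets (\<Omega> n)" for n \<delta>
    unfolding C2_def N2_def \<Omega>def by (rule count_set_meas[OF E2s])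
  have nE1: "real n * measure (P n) (E1 n) = \<mu> n" for n unfolding mE1 \<mu>_def ..
  have nE2: "real n * measure (P n) (E2 n) = q * \<mu> n" for n
    unfolding mE2 \<mu>_def q_def using rpos by simp
  have mC1: "measure (\<Omega> n) (C1 n \<delta>) \<le> 1 / (\<delta>\<^sup>2 * \<mu> n)" if n1: "n \<ge> 1" and d: "\<delta> > 0" for n \<delta>
  proof -
    have t: "\<delta> * \<mu> n > 0" using d \<mu>pos[OF n1] by simp
    have "measure (\<Omega> n) (C1 n \<delta>) \<le> real n * measure (P n) (E1 n) / (\<delta> * \<mu> n)\<^sup>2"
      unfolding C1_def N1_def \<Omega>def by (rule count_cheb[OF P_prob E1s t])
    also have "\<dots> = 1 / (\<delta>\<^sup>2 * \<mu> n)" unfolding nE1 using \<mu>pos[OF n1] d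
      by (simp add: power2_eq_square field_simps)
    finally show ?thesis .
  qed
  have mC2: "measure (\<Omega> n) (C2 n \<delta>) \<le> 1 / (\<delta>\<^sup>2 * \<mu> n)" if n1: "n \<ge> 1" and d: "\<delta> > 0" for n \<delta>
  proof -
    have t: "\<delta> * \<mu> n > 0" using d \<mu>pos[OF n1] by simp
    have "measure (\<Omega> n) (C2 n \<delta>) \<le> real n * measure (P n) (E2 n) / (\<delta> * \<mu> n)\<^sup>2"
      unfolding C2_def N2_def \<Omega>def by (rule count_cheb[OF P_prob E2s t])
    also have "\<dots> = q * (1 / (\<delta>\<^sup>2 * \<mu> n))" unfolding nE2 using \<mu>pos[OF n1] d
      by (simp add: power2_eq_square field_simps)
    also have "\<dots> \<le> 1 / (\<delta>\<^sup>2 * \<mu> n)"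
      using q1 qpos \<mu>pos[OF n1] d by (intro mult_left_le_one_le) auto
    finally show ?thesis .
  qed
  have G1sub: "G1 (A n) n \<omega> \<subseteq> {i\<in>{1..n}. \<omega> i \<in> E1 n}" for n \<omega>
    unfolding G1_def E1_def using aX by (auto simp: Pspace)
  have G1good: "G1 (A n) n \<omega> = {i\<in>{1..n}. \<omega> i \<in> E1 n}" if nb: "\<omega> \<notin> Bad n" and sp: "\<omega> \<in> space (\<Omega> n)" for n \<omega>
  proof
    show "G1 (A n) n \<omega> \<subseteq> {i\<in>{1..n}. \<omega> i \<in> E1 n}" by (rule G1sub)
    show "{i\<in>{1..n}. \<omega> i \<in> E1 n} \<subseteq> G1 (A n) n \<omega>"
    proof
      fix i assume i: "i \<in> {i\<in>{1..n}. \<omega> i \<in> E1 n}"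
      then have Zi: "Zv (\<omega> i)" and Xi: "Xv (\<omega> i) \<in> \<X>" and i1: "i \<in> {1..n}" unfolding E1_def by auto
      then obtain a where aA: "a \<in> A n" and xa: "Xv (\<omega> i) \<in> a" using A_cover[of n] by blast
      have "\<omega> \<notin> NoC n a" using nb aA unfolding Bad_def by blast
      then obtain j where j: "j \<in> {1..n}" "\<omega> j \<in> Ea n a" using sp unfolding NoC_def by blast
      then show "i \<in> G1 (A n) n \<omega>" unfolding G1_def Ea_def using Zi xa aA i1 by blast
    qed
  qed
  have sumY: "(\<Sum>i \<in> G1 (A n) n \<omega>. Yat \<tau> (\<omega> i)) = N2 n \<omega>" if "\<omega> \<notin> Bad n" "\<omega> \<in> space (\<Omega> n)" for n \<omega>
  proof -
    have "(\<Sum>i \<in> G1 (A n) n \<omega>. Yat \<tau> (\<omega> i)) = (\<Sum>i \<in> {i\<in>{1..n}. \<omega> i \<in> E1 n}. if \<tau> \<le> Ttil (\<omega> i) then 1 else 0)"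
      unfolding G1good[OF that] Yat_def ..
    also have "\<dots> = (\<Sum>i \<in> {i\<in>{i\<in>{1..n}. \<omega> i \<in> E1 n}. \<tau> \<le> Ttil (\<omega> i)}. 1)"
      by (rule sum.inter_filter[symmetric]) simp
    also have "{i\<in>{i\<in>{1..n}. \<omega> i \<in> E1 n}. \<tau> \<le> Ttil (\<omega> i)} = {i\<in>{1..n}. \<omega> i \<in> E2 n}"
      unfolding E1_def E2_def by auto
    finally show ?thesis unfolding N2_def by simp
  qed
  have n1N1: "real (n1 (A n) n \<omega>) \<le> N1 n \<omega>" for n \<omega>
    unfolding n1_def N1_def using G1sub by (simp add: card_mono)
  have n1good: "real (n1 (A n) n \<omega>) = N1 n \<omega>" if "\<omega> \<notin> Bad n" "\<omega> \<in> space (\<Omega> n)" for n \<omega>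
    unfolding n1_def N1_def G1good[OF that] ..

  have mnn: "\<And>n S. 0 \<le> measure (\<Omega> n) S" by simp
  have claim1: "conv_prob (\<lambda>n. sample_space (P n) n) (\<lambda>n \<omega>. pinv (real (n1 (A n) n \<omega>))) 0"
    unfolding conv_prob_def \<Omega>_def[symmetric]
  proof (intro allI impI)
    fix e :: real assume e: "e > 0"
    define b where "b n = measure (\<Omega> n) (Bad n) + 4 * (1 / \<mu> n)" for n
    have blim: "b \<longlonglongrightarrow> 0" unfolding b_def
      by (intro tendsto_add_zero Badlim tendsto_mult_right_zero inv\<mu>)
    have e2: "(0::real) < e / 2" using e by simp
    have ev: "\<forall>\<^sub>F n in sequentially. 1 / \<mu> n < e / 2" using order_tendstoD(2)[OF inv\<mu> e2] .
    show "(\<lambda>n. measure (\<Omega> n) {\<omega> \<in> space (\<Omega> n). e < \<bar>pinv (real (n1 (A n) n \<omega>)) - 0\<bar>}) \<longlonglongrightarrow> 0"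
    proof (rule squeeze0[OF _ blim])
      show "\<forall>\<^sub>F n in sequentially. measure (\<Omega> n) {\<omega> \<in> space (\<Omega> n). e < \<bar>pinv (real (n1 (A n) n \<omega>)) - 0\<bar>} \<le> b n"
        using ev eventually_ge_at_top[of 1]
      proof eventually_elim
        case (elim n)
        have mup: "\<mu> n > 0" using \<mu>pos elim by simp
        have sub: "{\<omega> \<in> space (\<Omega> n). e < \<bar>pinv (real (n1 (A n) n \<omega>)) - 0\<bar>} \<subseteq> Bad n \<union> C1 n (1/2)"
        proof
          fix \<omega> assume \<omega>: "\<omega> \<in> {\<omega> \<in> space (\<Omega> n). e < \<bar>pinv (real (n1 (A n) n \<omega>)) - 0\<bar>}"
          show "\<omega> \<in> Bad n \<union> C1 n (1/2)"
          proof (rule ccontr)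
            assume "\<omega> \<notin> Bad n \<union> C1 n (1/2)"
            then have nb: "\<omega> \<notin> Bad n" and nc: "\<omega> \<notin> C1 n (1/2)" by auto
            have sp: "\<omega> \<in> space (\<Omega> n)" using \<omega> by simp
            have close: "\<bar>N1 n \<omega> - \<mu> n\<bar> < (1/2) * \<mu> n" using nc sp unfolding C1_def nE1 by auto
            have big: "e < pinv (N1 n \<omega>)" using \<omega> n1good[OF nb sp] by (auto simp: pinv_def N1_def split: if_splits)
            have N0: "N1 n \<omega> \<noteq> 0" using big e by (auto simp: pinv_def)
            have "N1 n \<omega> \<ge> 0" unfolding N1_def by simp
            then have Np: "N1 n \<omega> > 0" using N0 by linarith
            have "e < 1 / N1 n \<omega>" using big N0 by (simp add: pinv_def)
            then have h1: "e * N1 n \<omega> < 1" using Np by (simp add: field_simps)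
            have h2: "1 < e / 2 * \<mu> n" using elim(1) mup by (simp add: field_simps)
            have h3: "\<mu> n < 2 * N1 n \<omega>" using close unfolding abs_less_iff by linarith
            have "e * \<mu> n < e * (2 * N1 n \<omega>)" using h3 e by (rule mult_strict_left_mono)
            then show False using h1 h2 by simp
          qed
        qed
        have "measure (\<Omega> n) {\<omega> \<in> space (\<Omega> n). e < \<bar>pinv (real (n1 (A n) n \<omega>)) - 0\<bar>}
            \<le> measure (\<Omega> n) (Bad n \<union> C1 n (1/2))"
          using sub Bads C1s by (intro measure_mono_any[OF \<Omega>fin]) auto
        also have "\<dots> \<le> measure (\<Omega> n) (Bad n) + measure (\<Omega> n) (C1 n (1/2))"
          using Bads C1s by (intro measure_Un_le) auto
        also have "\<dots> \<le> b n" unfolding b_def using mC1[OF elim(2), of "1/2"]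
          by (simp add: power2_eq_square)
        finally show ?case .
      qed
    qed (rule mnn)
  qed

  have meshnn: "0 \<le> mesh (A n)" for n
  proof (rule mesh_nonneg[OF A_fin])
    fix a assume "a \<in> A n"
    then show "bounded a" by (rule bounded_subset[OF compact_imp_bounded[OF X_compact] aX])
  qed
  have claim2: "conv_prob (\<lambda>n. sample_space (P n) n) (\<lambda>n \<omega>. sqrt (real (n1 (A n) n \<omega>)) * mesh (A n)) 0"
    unfolding conv_prob_def \<Omega>_def[symmetric]
  proof (intro allI impI)
    fix e :: real assume e: "e > 0"
    define S where "S n = sqrt (3/2 * C\<pi> * real n powr \<beta>)" for n
    have nb: "real n * real n powr (\<beta> - 1) = real n powr \<beta>" for n
      using powr_mult_base[of "real n" "\<beta> - 1"] by simp
    define bS where "bS n = Cd * (S n * real n powr (- \<theta>))" for n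
    have bSlim: "bS \<longlonglongrightarrow> 0" unfolding bS_def S_def
    proof (intro tendsto_mult_right_zero)
      show "(\<lambda>n. sqrt (3 / 2 * C\<pi> * real n powr \<beta>) * real n powr - \<theta>) \<longlonglongrightarrow> 0"
        using B1(1) B1(7) c\<pi>(2) by real_asymp
    qed
    have ev: "\<forall>\<^sub>F n in sequentially. dist (bS n) 0 < e" using tendstoD[OF bSlim e] .
    define b where "b n = 4 * (1 / \<mu> n)" for n
    have blim: "b \<longlonglongrightarrow> 0" unfolding b_def by (intro tendsto_mult_right_zero inv\<mu>)
    show "(\<lambda>n. measure (\<Omega> n) {\<omega> \<in> space (\<Omega> n). e < \<bar>sqrt (real (n1 (A n) n \<omega>)) * mesh (A n) - 0\<bar>}) \<longlonglongrightarrow> 0"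
    proof (rule squeeze0[OF _ blim])
      show "\<forall>\<^sub>F n in sequentially. measure (\<Omega> n) {\<omega> \<in> space (\<Omega> n). e < \<bar>sqrt (real (n1 (A n) n \<omega>)) * mesh (A n) - 0\<bar>} \<le> b n"
        using ev eventually_ge_at_top[of 1]
      proof eventually_elim
        case (elim n)
        have mup: "\<mu> n > 0" using \<mu>pos elim by simp
        have sub: "{\<omega> \<in> space (\<Omega> n). e < \<bar>sqrt (real (n1 (A n) n \<omega>)) * mesh (A n) - 0\<bar>} \<subseteq> C1 n (1/2)"
        proof
          fix \<omega> assume \<omega>: "\<omega> \<in> {\<omega> \<in> space (\<Omega> n). e < \<bar>sqrt (real (n1 (A n) n \<omega>)) * mesh (A n) - 0\<bar>}"
          show "\<omega> \<in> C1 n (1/2)"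
          proof (rule ccontr)
            assume nc: "\<omega> \<notin> C1 n (1/2)"
            have sp: "\<omega> \<in> space (\<Omega> n)" using \<omega> by simp
            have close: "\<bar>N1 n \<omega> - \<mu> n\<bar> < (1/2) * \<mu> n" using nc sp unfolding C1_def nE1 by auto
            have "real (n1 (A n) n \<omega>) \<le> 3/2 * C\<pi> * (real n * real n powr (\<beta> - 1))"
              using n1N1[of n \<omega>] close \<mu>hi[OF elim(2)] unfolding abs_less_iff by linarith
            then have sq: "sqrt (real (n1 (A n) n \<omega>)) \<le> S n" unfolding S_def nb by simp
            have mh: "mesh (A n) \<le> Cd * real n powr (- \<theta>)" by (rule Cd[OF elim(2)])
            have "sqrt (real (n1 (A n) n \<omega>)) * mesh (A n) \<le> S n * (Cd * real n powr (- \<theta>))"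
              using sq mh meshnn[of n] by (intro mult_mono) (auto simp: S_def)
            also have "\<dots> = bS n" unfolding bS_def by (simp add: mult_ac)
            also have "\<dots> < e" using elim(1) unfolding dist_real_def by simp
            finally have "sqrt (real (n1 (A n) n \<omega>)) * mesh (A n) < e" .
            moreover have "e < sqrt (real (n1 (A n) n \<omega>)) * mesh (A n)"
            proof -
              have nn: "0 \<le> sqrt (real (n1 (A n) n \<omega>)) * mesh (A n)" using meshnn[of n] by simp
              have "e < \<bar>sqrt (real (n1 (A n) n \<omega>)) * mesh (A n) - 0\<bar>" using \<omega> by blast
              then show ?thesis using nn by linarith
            qed
            ultimately show False by simp
          qed
        qed
        have "measure (\<Omega> n) {\<omega> \<in> space (\<Omega> n). e < \<bar>sqrt (real (n1 (A n) n \<omega>)) * mesh (A n) - 0\<bar>}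
            \<le> measure (\<Omega> n) (C1 n (1/2))"
          using sub C1s by (intro measure_mono_any[OF \<Omega>fin]) auto
        also have "\<dots> \<le> b n" unfolding b_def using mC1[OF elim(2), of "1/2"]
          by (simp add: power2_eq_square)
        finally show ?case .
      qed
    qed (rule mnn)
  qed

  have claim3: "conv_prob (\<lambda>n. sample_space (P n) n)
               (\<lambda>n \<omega>. pinv (real (n1 (A n) n \<omega>)) * (\<Sum>i \<in> G1 (A n) n \<omega>. Yat \<tau> (\<omega> i))) q"
    unfolding conv_prob_def \<Omega>_def[symmetric]
  proof (intro allI impI)
    fix e :: real assume e: "e > 0"
    define \<delta> where "\<delta> = min (1/2) (e/4)"
    have d: "0 < \<delta>" "\<delta> \<le> 1/2" "4 * \<delta> \<le> e" unfolding \<delta>_def using e by auto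
    define b where "b n = measure (\<Omega> n) (Bad n) + (2 / \<delta>\<^sup>2) * (1 / \<mu> n)" for n
    have blim: "b \<longlonglongrightarrow> 0" unfolding b_def
      by (intro tendsto_add_zero Badlim tendsto_mult_right_zero inv\<mu>)
    let ?W = "\<lambda>n \<omega>. pinv (real (n1 (A n) n \<omega>)) * (\<Sum>i \<in> G1 (A n) n \<omega>. Yat \<tau> (\<omega> i))"
    show "(\<lambda>n. measure (\<Omega> n) {\<omega> \<in> space (\<Omega> n). e < \<bar>?W n \<omega> - q\<bar>}) \<longlonglongrightarrow> 0"
    proof (rule squeeze0[OF _ blim])
      show "\<forall>\<^sub>F n in sequentially. measure (\<Omega> n) {\<omega> \<in> space (\<Omega> n). e < \<bar>?W n \<omega> - q\<bar>} \<le> b n"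
        using eventually_ge_at_top[of 1]
      proof eventually_elim
        case (elim n)
        have mup: "\<mu> n > 0" using \<mu>pos elim by simp
        have sub: "{\<omega> \<in> space (\<Omega> n). e < \<bar>?W n \<omega> - q\<bar>} \<subseteq> (Bad n \<union> C1 n \<delta>) \<union> C2 n \<delta>"
        proof
          fix \<omega> assume \<omega>: "\<omega> \<in> {\<omega> \<in> space (\<Omega> n). e < \<bar>?W n \<omega> - q\<bar>}"
          show "\<omega> \<in> (Bad n \<union> C1 n \<delta>) \<union> C2 n \<delta>"
          proof (rule ccontr)
            assume "\<omega> \<notin> (Bad n \<union> C1 n \<delta>) \<union> C2 n \<delta>"
            then have nb: "\<omega> \<notin> Bad n" and nc1: "\<omega> \<notin> C1 n \<delta>" and nc2: "\<omega> \<notin> C2 n \<delta>" by auto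
            have sp: "\<omega> \<in> space (\<Omega> n)" using \<omega> by simp
            have c1: "\<bar>N1 n \<omega> - \<mu> n\<bar> < \<delta> * \<mu> n" using nc1 sp unfolding C1_def nE1 by auto
            have c2: "\<bar>N2 n \<omega> - q * \<mu> n\<bar> < \<delta> * \<mu> n" using nc2 sp unfolding C2_def nE2 by auto
            have dm: "\<delta> * \<mu> n \<le> \<mu> n / 2" using mult_right_mono[OF d(2), of "\<mu> n"] mup by simp
            have Np: "N1 n \<omega> > 0" using c1 dm mup unfolding abs_less_iff by linarith
            have W: "?W n \<omega> = N2 n \<omega> / N1 n \<omega>"
              using n1good[OF nb sp] sumY[OF nb sp] Np by (simp add: pinv_def)
            have "\<bar>N2 n \<omega> / N1 n \<omega> - q\<bar> < e"
              by (rule ratio_bound[OF mup qpos q1 d c1 c2])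
            moreover have "e < \<bar>?W n \<omega> - q\<bar>" using \<omega> by blast
            ultimately show False unfolding W by linarith
          qed
        qed
        have "measure (\<Omega> n) {\<omega> \<in> space (\<Omega> n). e < \<bar>?W n \<omega> - q\<bar>}
            \<le> measure (\<Omega> n) ((Bad n \<union> C1 n \<delta>) \<union> C2 n \<delta>)"
          using sub Bads C1s C2s by (intro measure_mono_any[OF \<Omega>fin]) auto
        also have "\<dots> \<le> measure (\<Omega> n) (Bad n \<union> C1 n \<delta>) + measure (\<Omega> n) (C2 n \<delta>)"
          using Bads C1s C2s by (intro measure_Un_le) auto
        also have "\<dots> \<le> measure (\<Omega> n) (Bad n) + measure (\<Omega> n) (C1 n \<delta>) + measure (\<Omega> n) (C2 n \<delta>)"
          using Bads C1s by (simp add: measure_Un_le)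
        also have "\<dots> \<le> b n" unfolding b_def using mC1[OF elim d(1)] mC2[OF elim d(1)]
          by (simp add: field_simps)
        finally show ?case .
      qed
    qed (rule mnn)
  qed
  show ?thesis unfolding Let_def r_def[symmetric] r2_def[symmetric] q_def[symmetric]
    using claim1 claim2 claim3 qpos by blast

qed

end
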